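(* Consider a deterministic online algorithm for minimizing total completion time on a single machine with job-size predictions, where all $n$ jobs are available at time $0$. If the algorithm uses at most $s$ preemptions in total on every instance with $n$ jobs whose predictions are exact (i.e. $\hat p_j=p_j$ for all $j$), then there exists an instance with $n$ jobs in which every job is overestimated ($\hat p_j\ge p_j$) on which the algorithm's total completion time is at least $\Omega\big(\frac{n-s}{s}\big)$ times the optimal total completion time.
   Context: A single machine processes at most one job at a time at unit speed; preemption is allowed. Each job $j$ has a processing requirement $p_j>0$ unknown to the algorithm until completion and a prediction $\hat p_j$ known at time $0$; $j$ completes at time $C_j$ once it has received $p_j$ units of processing. A preemption is an interruption of a job's processing before it completes. The optimal total completion time is that of the best offline schedule knowing all $p_j$. *)

theory Defs
  imports Complex_Main "HOL-Library.Extended_Real"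
begin

text \<open>Jobs are 0..<n. A schedule is an infinite sequence of segments
  (c, d, b): during a segment of length d the machine runs job c (None = idle);
  b says whether the job completed at the end of the segment.\<close>

type_synonym seg = "nat option \<times> real \<times> bool"

text \<open>A deterministic online algorithm: given the predictions and the history
  observed so far (segments with completion flags), it decides which job to run
  next (or idle) and for how long at most (it is reconsulted when the job
  completes or the time elapses).\<close>
type_synonym alg = "(nat \<Rightarrow> real) \<Rightarrow> seg list \<Rightarrow> nat option \<times> real"

definition processed :: "seg list \<Rightarrow> nat \<Rightarrow> real" where
  "processed h j = sum_list (map (\<lambda>(c, d, b). if c = Some j then d else 0) h)"

definition step :: "nat \<Rightarrow> (nat \<Rightarrow> real) \<Rightarrow> nat option \<times> real \<Rightarrow> seg list \<Rightarrow> seg" where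
  "step n p a h =
     (let c = fst a; l = max (snd a) 0 in
      case c of
        None \<Rightarrow> (None, l, False)
      | Some j \<Rightarrow>
          (if j < n \<and> processed h j < p j then
             (if p j - processed h j \<le> l then (Some j, p j - processed h j, True)
              else (Some j, l, False))
           else (None, l, False)))"

fun hist :: "nat \<Rightarrow> alg \<Rightarrow> (nat \<Rightarrow> real) \<Rightarrow> (nat \<Rightarrow> real) \<Rightarrow> nat \<Rightarrow> seg list" where
  "hist n A pr p 0 = []"
| "hist n A pr p (Suc k) =
     (let h = hist n A pr p k in h @ [step n p (A pr h) h])"

definition segs :: "nat \<Rightarrow> alg \<Rightarrow> (nat \<Rightarrow> real) \<Rightarrow> (nat \<Rightarrow> real) \<Rightarrow> nat \<Rightarrow> seg" where
  "segs n A pr p i = step n p (A pr (hist n A pr p i)) (hist n A pr p i)"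

definition completes :: "nat \<Rightarrow> alg \<Rightarrow> (nat \<Rightarrow> real) \<Rightarrow> (nat \<Rightarrow> real) \<Rightarrow> nat \<Rightarrow> nat \<Rightarrow> bool" where
  "completes n A pr p j i \<longleftrightarrow> fst (segs n A pr p i) = Some j \<and> snd (snd (segs n A pr p i))"

definition compl_time :: "nat \<Rightarrow> alg \<Rightarrow> (nat \<Rightarrow> real) \<Rightarrow> (nat \<Rightarrow> real) \<Rightarrow> nat \<Rightarrow> ereal" where
  "compl_time n A pr p j =
     (if \<exists>i. completes n A pr p j i
      then ereal (\<Sum>k\<le>(LEAST i. completes n A pr p j i). fst (snd (segs n A pr p k)))
      else \<infinity>)"

definition total_cost :: "nat \<Rightarrow> alg \<Rightarrow> (nat \<Rightarrow> real) \<Rightarrow> (nat \<Rightarrow> real) \<Rightarrow> ereal" where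
  "total_cost n A pr p = (\<Sum>j<n. compl_time n A pr p j)"

definition preempt_points :: "nat \<Rightarrow> alg \<Rightarrow> (nat \<Rightarrow> real) \<Rightarrow> (nat \<Rightarrow> real) \<Rightarrow> nat set" where
  "preempt_points n A pr p =
     {i. \<exists>j. fst (segs n A pr p i) = Some j \<and> \<not> snd (snd (segs n A pr p i))
            \<and> fst (segs n A pr p (Suc i)) \<noteq> Some j}"

definition preempt_le :: "nat \<Rightarrow> alg \<Rightarrow> (nat \<Rightarrow> real) \<Rightarrow> (nat \<Rightarrow> real) \<Rightarrow> nat \<Rightarrow> bool" where
  "preempt_le n A pr p s \<longleftrightarrow> finite (preempt_points n A pr p) \<and> card (preempt_points n A pr p) \<le> s"

text \<open>Offline optimum: best total completion time over all fixed (offline,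
  information-independent) segment plans.\<close>
definition opt_cost :: "nat \<Rightarrow> (nat \<Rightarrow> real) \<Rightarrow> ereal" where
  "opt_cost n p = Inf {total_cost n (\<lambda>_ h. \<sigma> (length h)) p p | \<sigma>. True}"

definition online_alg :: "alg \<Rightarrow> bool" where
  "online_alg A \<longleftrightarrow> (\<forall>pr h. snd (A pr h) > 0)"

end

theory Submission
  imports Defs
begin


abbreviation len :: "seg \<Rightarrow> real" where "len x \<equiv> fst (snd x)"

lemma hist_len: "length (hist n A pr p k) = k"
  by (induction k) (auto simp: Let_def)

lemma hist_map: "hist n A pr p k = map (segs n A pr p) [0..<k]"
  by (induction k) (auto simp: Let_def segs_def)

lemma step_len_nonneg: "len (step n p a h) \<ge> 0"
  unfolding step_def Let_def by (auto split: option.splits)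

lemma segs_len_nonneg: "len (segs n A pr p i) \<ge> 0"
  unfolding segs_def by (rule step_len_nonneg)

lemma processed_append:
  "processed (h @ [x]) j = processed h j + (if fst x = Some j then len x else 0)"
  unfolding processed_def by (cases x) auto

lemma processed_Cons:
  "processed (x # h) j = (if fst x = Some j then len x else 0) + processed h j"
  unfolding processed_def by (cases x) auto

lemma processed_hist_Suc:
  "processed (hist n A pr p (Suc k)) j = processed (hist n A pr p k) j
     + (if fst (segs n A pr p k) = Some j then len (segs n A pr p k) else 0)"
  by (simp add: Let_def processed_append segs_def)

lemma processed_hist_mono:
  assumes "k \<le> k'"
  shows "processed (hist n A pr p k) j \<le> processed (hist n A pr p k') j"
  using assms
proof (induction k' rule: dec_induct)
  case base then show ?case by simp
next
  case (step m)
  then show ?case using segs_len_nonneg[of n A pr p m]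
    by (simp only: processed_hist_Suc) simp
qed

lemma step_done:
  assumes "step n p a h = (Some j, d, True)"
  shows "d = p j - processed h j"
  using assms unfolding step_def Let_def
  by (auto split: option.splits if_splits)

lemma completes_processed:
  assumes "completes n A pr p j i"
  shows "processed (hist n A pr p (Suc i)) j = p j"
proof -
  obtain d where s: "segs n A pr p i = (Some j, d, True)"
    using assms unfolding completes_def by (cases "segs n A pr p i") auto
  then have "d = p j - processed (hist n A pr p i) j"
    unfolding segs_def by (rule step_done)
  then show ?thesis using s by (simp only: processed_hist_Suc) simp
qed

lemma sum_processed_le:
  assumes "finite J" "\<forall>x\<in>set h. len x \<ge> 0"
  shows "sum (processed h) J \<le> sum_list (map len h)"
  using assms(2)
proof (induction h)
  case Nil then show ?case by (simp add: processed_def)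
next
  case (Cons x h)
  have a: "(\<Sum>j\<in>J. (if fst x = Some j then len x else 0)) \<le> len x"
  proof (cases "fst x")
    case None then show ?thesis using Cons.prems by simp
  next
    case (Some j0)
    have "(\<Sum>j\<in>J. (if fst x = Some j then len x else 0)) = (\<Sum>j\<in>J. (if j = j0 then len x else 0))"
      using Some by (intro sum.cong) auto
    also have "\<dots> = (if j0 \<in> J then len x else 0)"
      using assms(1) by (simp add: sum.delta')
    finally show ?thesis using Cons.prems by simp
  qed
  have "sum (processed (x # h)) J = (\<Sum>j\<in>J. (if fst x = Some j then len x else 0)) + sum (processed h) J"
    by (simp add: processed_Cons sum.distrib)
  also have "\<dots> \<le> len x + sum_list (map len h)"
    using a Cons by (intro add_mono) auto
  finally show ?case by simp
qed

definition time :: "nat \<Rightarrow> alg \<Rightarrow> (nat \<Rightarrow> real) \<Rightarrow> (nat \<Rightarrow> real) \<Rightarrow> nat \<Rightarrow> real" where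
  "time n A pr p k = (\<Sum>i<k. len (segs n A pr p i))"

lemma time_hist: "time n A pr p k = sum_list (map len (hist n A pr p k))"
  unfolding time_def hist_map
  by (simp add: interv_sum_list_conv_sum_set_nat atLeast0LessThan)

lemma count_le_time:
  assumes "finite J" "\<forall>j\<in>J. \<exists>i<K. completes n A pr p j i"
  shows "sum p J \<le> time n A pr p K"
proof -
  have "sum p J \<le> sum (processed (hist n A pr p K)) J"
  proof (rule sum_mono)
    fix j assume "j \<in> J"
    then obtain i where "i < K" "completes n A pr p j i" using assms by blast
    then show "p j \<le> processed (hist n A pr p K) j"
      using completes_processed processed_hist_mono[of "Suc i" K]
      by (metis Suc_leI order_refl)
  qed
  also have "\<dots> \<le> time n A pr p K"
    unfolding time_hist using assms(1)
    by (rule sum_processed_le) (auto simp: hist_map segs_len_nonneg)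
  finally show ?thesis .
qed



lemma compl_time_nonneg: "compl_time n A pr p j \<ge> 0"
  unfolding compl_time_def by (auto intro!: sum_nonneg segs_len_nonneg)

lemma total_cost_nonneg: "total_cost n A pr p \<ge> 0"
  unfolding total_cost_def by (rule sum_nonneg) (rule compl_time_nonneg)

lemma opt_cost_nonneg: "opt_cost n p \<ge> 0"
  unfolding opt_cost_def by (auto intro!: Inf_greatest total_cost_nonneg)

lemma opt_le_plan: "opt_cost n p \<le> total_cost n (\<lambda>_ h. \<sigma> (length h)) p p"
  unfolding opt_cost_def by (rule Inf_lower) blast

lemma sim_hist:
  "hist n (\<lambda>_ h. A pr (hist n A pr p (length h))) q p k = hist n A pr p k"
  by (induction k) (auto simp: Let_def hist_len)

lemma sim_cost:
  "total_cost n (\<lambda>_ h. A pr (hist n A pr p (length h))) p p = total_cost n A pr p"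
proof -
  have e: "segs n (\<lambda>_ h. A pr (hist n A pr p (length h))) p p = segs n A pr p"
    by (rule ext) (simp add: segs_def sim_hist hist_len)
  show ?thesis
    unfolding total_cost_def compl_time_def completes_def e ..
qed

lemma opt_le_alg: "opt_cost n p \<le> total_cost n A pr p"
  using opt_le_plan[of n p "\<lambda>i. A pr (hist n A pr p i)"] sim_cost[of n A pr p]
  by simp

lemma ereal_scale_le:
  fixes x :: ereal
  assumes "f \<le> 1" "x \<ge> 0"
  shows "ereal f * x \<le> x"
proof (cases x)
  case (real r)
  then show ?thesis using assms by (simp add: mult_left_le_one_le) (metis mult_left_le_one_le mult_nonneg_nonneg mult_right_mono not_le order_trans less_imp_le mult_le_cancel_right1 mult_nonpos_nonneg)
next
  case PInf
  then show ?thesis using assms by (cases "f > 0"; cases "f = 0") auto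
next
  case MInf
  then show ?thesis using assms by simp
qed



definition planL :: "nat \<Rightarrow> nat list \<Rightarrow> alg" where
  "planL n L = (\<lambda>_ h. if length h < n then (Some (L ! length h), 1) else (None, 1))"

locale plan_setup =
  fixes n :: nat and L :: "nat list" and q :: "nat \<Rightarrow> real"
  assumes dL: "distinct L" and sL: "set L = {..<n}" and qpos: "\<And>x. q x > 0" and qle: "\<And>x. q x \<le> 1"
begin

lemma lenL: "length L = n"
  using distinct_card[OF dL] sL by simp

lemma Lnth: "i < n \<Longrightarrow> L ! i < n"
  using sL lenL nth_mem by fastforce

lemma plan_hist: "k \<le> n \<Longrightarrow> hist n (planL n L) q q k = map (\<lambda>i. (Some (L!i), q (L!i), True)) [0..<k]"
proof (induction k)
  case 0 then show ?case by simp
next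
  case (Suc k)
  then have IH: "hist n (planL n L) q q k = map (\<lambda>i. (Some (L!i), q (L!i), True)) [0..<k]" by simp
  have k: "k < n" using Suc by simp
  have pr0: "processed (map (\<lambda>i. (Some (L!i), q (L!i), True)) [0..<k]) (L!k) = 0"
  proof -
    have ne: "\<forall>i\<in>set [0..<k]. L!i \<noteq> L!k" using k dL lenL nth_eq_iff_index_eq by fastforce
    have "map (\<lambda>(c, d, b). if c = Some (L ! k) then d else 0) (map (\<lambda>i. (Some (L ! i), q (L ! i), True)) [0..<k])
          = map (\<lambda>_. 0) [0..<k]" using ne by auto
    then show ?thesis unfolding processed_def by (simp only:) simp
  qed
  have "step n q (planL n L q (hist n (planL n L) q q k)) (hist n (planL n L) q q k)
        = (Some (L!k), q (L!k), True)"
  proof -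
    have d: "planL n L q (hist n (planL n L) q q k) = (Some (L!k), 1)"
      using k by (simp add: planL_def hist_len)
    show ?thesis
      unfolding d using k pr0 qpos[of "L!k"] qle[of "L!k"] Lnth[OF k]
      by (simp add: IH step_def Let_def)
  qed
  then show ?case by (simp add: Let_def IH)
qed

lemma plan_segs: "i < n \<Longrightarrow> segs n (planL n L) q q i = (Some (L!i), q (L!i), True)"
proof -
  assume i: "i < n"
  have "map (segs n (planL n L) q q) [0..<n] = map (\<lambda>i. (Some (L!i), q (L!i), True)) [0..<n]"
    using plan_hist[of n] by (simp add: hist_map)
  then show ?thesis using i by (metis (no_types, lifting) map_eq_conv atLeastLessThan_iff set_upt zero_le)
qed

lemma plan_segs_ge: "i \<ge> n \<Longrightarrow> fst (segs n (planL n L) q q i) = None"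
  by (simp add: segs_def planL_def step_def hist_len Let_def)

lemma plan_compl: "i < n \<Longrightarrow> compl_time n (planL n L) q q (L!i) = ereal (\<Sum>k\<le>i. q (L!k))"
proof -
  assume i: "i < n"
  have c: "completes n (planL n L) q q (L!i) i" using plan_segs[OF i] by (simp add: completes_def)
  have le: "i \<le> i'" if "completes n (planL n L) q q (L!i) i'" for i'
  proof (rule ccontr)
    assume "\<not> i \<le> i'"
    then have "i' < n" "i' < i" using i by auto
    then have "L!i' = L!i" using that plan_segs by (simp add: completes_def)
    then show False using \<open>i' < i\<close> i dL lenL nth_eq_iff_index_eq by fastforce
  qed
  have "(LEAST i'. completes n (planL n L) q q (L!i) i') = i"
    by (rule Least_equality) (use c le in auto)
  moreover have "(\<Sum>k\<le>i. len (segs n (planL n L) q q k)) = (\<Sum>k\<le>i. q (L!k))"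
    by (rule sum.cong) (use i plan_segs in auto)
  ultimately show ?thesis using c unfolding compl_time_def by auto
qed

end



lemma opt_bound:
  fixes S :: "nat set" and \<epsilon> :: real
  assumes S: "S \<subseteq> {..<n}" and e: "0 < \<epsilon>" "\<epsilon> \<le> 1"
  defines "q \<equiv> (\<lambda>j. if j \<in> S then 1 else \<epsilon>)"
  shows "opt_cost n q \<le> ereal (real n * real n * \<epsilon> + real (card S) * real (card S))"
proof -
  define L1 where "L1 = filter (\<lambda>j. j \<notin> S) [0..<n]"
  define L where "L = L1 @ filter (\<lambda>j. j \<in> S) [0..<n]"
  have dL: "distinct L" unfolding L_def L1_def by auto
  have sL: "set L = {..<n}" unfolding L_def L1_def by auto
  interpret plan_setup n L q
    by unfold_locales (use dL sL e in \<open>auto simp: q_def\<close>)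
  have finS: "finite S" using S finite_subset by blast
  have tot: "sum q {..<n} \<le> real n * \<epsilon> + real (card S)"
  proof -
    have "sum q {..<n} \<le> (\<Sum>j<n. \<epsilon> + (if j \<in> S then 1 else 0))"
      by (rule sum_mono) (use e in \<open>auto simp: q_def\<close>)
    also have "\<dots> = real n * \<epsilon> + real (card ({..<n} \<inter> S))"
      by (simp add: sum.distrib sum.If_cases)
    also have "{..<n} \<inter> S = S" using S by blast
    finally show ?thesis .
  qed
  have sumL: "(\<Sum>k<n. q (L!k)) = sum q {..<n}"
  proof -
    have "(\<Sum>k<n. q (L!k)) = sum_list (map q L)"
      by (simp add: sum_list_sum_nth lenL atLeast0LessThan)
    also have "\<dots> = sum q (set L)" using dL by (simp add: sum_list_distinct_conv_sum_set)
    finally show ?thesis using sL by simp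
  qed
  have bnd: "compl_time n (planL n L) q q j \<le> ereal (real n * \<epsilon> + (if j \<in> S then real (card S) else 0))"
    if j: "j < n" for j
  proof (cases "j \<in> S")
    case True
    obtain i where i: "i < n" "L!i = j" using j sL lenL by (metis in_set_conv_nth lessThan_iff)
    have "(\<Sum>k\<le>i. q (L!k)) \<le> (\<Sum>k<n. q (L!k))"
      by (rule sum_mono2) (use i qpos in \<open>auto intro: less_imp_le\<close>)
    then show ?thesis using plan_compl[OF i(1)] i tot sumL True by simp
  next
    case False
    have "j \<in> set L1" unfolding L1_def using j False by simp
    then obtain i where i: "i < length L1" "L1!i = j" by (metis in_set_conv_nth)
    have l1: "length L1 \<le> n" unfolding L1_def by (metis length_filter_le length_upt minus_nat.diff_0)
    have iL: "L!i = j" using i by (simp add: L_def nth_append)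
    have "(\<Sum>k\<le>i. q (L!k)) = (\<Sum>k\<le>i. \<epsilon>)"
    proof (rule sum.cong)
      fix k assume "k \<in> {..i}"
      then have "k < length L1" using i by auto
      then have "L!k = L1!k" "L1!k \<in> set L1" by (auto simp: L_def nth_append)
      then show "q (L!k) = \<epsilon>" by (simp add: q_def L1_def)
    qed simp
    also have "\<dots> = real (Suc i) * \<epsilon>" by simp
    also have "\<dots> \<le> real n * \<epsilon>" using i l1 e by (intro mult_right_mono) auto
    finally show ?thesis using plan_compl[of i] i l1 iL False by simp
  qed
  have "total_cost n (planL n L) q q \<le> (\<Sum>j<n. ereal (real n * \<epsilon> + (if j \<in> S then real (card S) else 0)))"
    unfolding total_cost_def by (rule sum_mono) (use bnd in auto)
  also have "\<dots> = ereal (\<Sum>j<n. real n * \<epsilon> + (if j \<in> S then real (card S) else 0))"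
    by (simp add: sum_ereal)
  also have "(\<Sum>j<n. real n * \<epsilon> + (if j \<in> S then real (card S) else 0)) = real n * real n * \<epsilon> + real (card S) * real (card S)"
  proof -
    have "{..<n} \<inter> S = S" using S by blast
    then show ?thesis by (simp add: sum.distrib sum.If_cases)
  qed
  finally have "total_cost n (planL n L) q q \<le> ereal (real n * real n * \<epsilon> + real (card S) * real (card S))" .
  moreover have "opt_cost n q \<le> total_cost n (planL n L) q q"
    using opt_le_plan[of n q "\<lambda>i. if i < n then (Some (L!i), 1) else (None, 1)"]
    by (simp add: planL_def)
  ultimately show ?thesis by (rule order_trans[rotated])
qed



lemma step_fst_lt: "fst (step n p a h) = Some j \<Longrightarrow> j < n"
  unfolding step_def Let_def by (auto split: option.splits if_splits)

lemma segs_fst_lt: "fst (segs n A pr p i) = Some j \<Longrightarrow> j < n"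
  unfolding segs_def by (rule step_fst_lt)

lemma processed_zero:
  assumes "\<forall>x\<in>set h. fst x \<noteq> Some j"
  shows "processed h j = 0"
  using assms by (induction h) (auto simp: processed_Cons, simp add: processed_def)

lemma step_cong:
  assumes "\<And>j. fst a = Some j \<Longrightarrow> j < n \<Longrightarrow> p j = p' j"
  shows "step n p a h = step n p' a h"
  using assms unfolding step_def Let_def by (auto split: option.splits)

lemma hist_cong:
  assumes "\<And>k. k < N \<Longrightarrow> step n q (A pr (hist n A pr p k)) (hist n A pr p k) = step n p (A pr (hist n A pr p k)) (hist n A pr p k)"
  shows "k \<le> N \<Longrightarrow> hist n A pr q k = hist n A pr p k"
proof (induction k)
  case 0 then show ?case by simp
next
  case (Suc k)
  then have "hist n A pr q k = hist n A pr p k" by simp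
  then show ?case using assms[of k] Suc.prems by (simp add: Let_def)
qed

lemma card_set_option_le: "card (set_option x) \<le> 1"
  by (cases x) auto

definition one :: "nat \<Rightarrow> real" where "one = (\<lambda>_. 1)"

lemma zeno_case:
  assumes "\<forall>k. time n A one one k < real s" "s \<le> n"
  shows "total_cost n A one one = \<infinity>"
proof -
  have "\<exists>j<n. \<not> (\<exists>i. completes n A one one j i)"
  proof (rule ccontr)
    assume "\<not> ?thesis"
    then have all: "\<forall>j<n. \<exists>i. completes n A one one j i" by blast
    define g where "g j = (SOME i. completes n A one one j i)" for j
    define K where "K = Suc (Max (g ` {..<n}))"
    have "\<forall>j\<in>{..<n}. \<exists>i<K. completes n A one one j i"
    proof
      fix j assume j: "j \<in> {..<n}"
      then have "completes n A one one j (g j)" using all unfolding g_def by (metis lessThan_iff someI_ex)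
      moreover have "g j < K" unfolding K_def using j by (simp add: le_imp_less_Suc)
      ultimately show "\<exists>i<K. completes n A one one j i" by blast
    qed
    then have "sum one {..<n} \<le> time n A one one K" by (intro count_le_time) auto
    then have "real n \<le> time n A one one K" by (simp add: one_def)
    then show False using assms(1)[rule_format, of K] assms(2) by linarith
  qed
  then obtain j where j: "j < n" "\<not> (\<exists>i. completes n A one one j i)" by blast
  then have "compl_time n A one one j = \<infinity>" unfolding compl_time_def by simp
  then show ?thesis unfolding total_cost_def using j by (subst sum_Pinfty) auto
qed



lemma adversary:
  assumes pl: "preempt_le n A one one s" and s1: "s \<ge> 1" and ns: "s \<le> n"
    and nz: "\<exists>k. real s \<le> time n A one one k"
  shows "\<exists>q. (\<forall>j. 0 < q j \<and> q j \<le> 1) \<and>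
           ereal (real s * (real n - 2 * real s)) \<le> total_cost n A one q \<and>
           opt_cost n q \<le> ereal (1 + 4 * real s * real s)"
proof -
  let ?seg = "segs n A one one"
  define N where "N = (LEAST k. real s \<le> time n A one one k)"
  have tN: "real s \<le> time n A one one N" unfolding N_def using nz by (rule LeastI_ex)
  have t0: "time n A one one 0 = 0" by (simp add: time_def)
  have N0: "N \<noteq> 0" using tN t0 s1 by (metis not_one_le_zero of_nat_le_0_iff)
  define M where "M = N - 1"
  have NM: "N = Suc M" using N0 unfolding M_def by simp
  have tM: "time n A one one M < real s"
    using not_less_Least[of M "\<lambda>k. real s \<le> time n A one one k"] NM unfolding N_def by simp
  define S where "S = {j. \<exists>i<N. fst (?seg i) = Some j}"
  have Sn: "S \<subseteq> {..<n}" unfolding S_def using segs_fst_lt by blast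
  have finS: "finite S" using Sn finite_subset by blast
  define C where "C = {j\<in>S. \<exists>i<M. completes n A one one j i}"
  have finC: "finite C" using finS unfolding C_def by simp
  have "sum one C \<le> time n A one one M"
    by (rule count_le_time) (use finC in \<open>auto simp: C_def\<close>)
  then have "real (card C) < real s" using tM by (simp add: one_def)
  then have cardC: "card C < s" by simp
  define lastj where "lastj j = Max {i. i < N \<and> fst (?seg i) = Some j}" for j
  define J0 where "J0 = S - C - set_option (fst (?seg M))"
  have lastj_prop: "lastj j < N \<and> fst (?seg (lastj j)) = Some j \<and> (\<forall>i. i < N \<and> fst (?seg i) = Some j \<longrightarrow> i \<le> lastj j)"
    if "j \<in> S" for j
  proof -
    have fin: "finite {i. i < N \<and> fst (?seg i) = Some j}" by simp
    have ne: "{i. i < N \<and> fst (?seg i) = Some j} \<noteq> {}" using that unfolding S_def by auto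
    show ?thesis using Max_in[OF fin ne] Max_ge[OF fin] unfolding lastj_def by auto
  qed
  have J0pp: "lastj ` J0 \<subseteq> preempt_points n A one one"
  proof
    fix x assume "x \<in> lastj ` J0"
    then obtain j where j: "j \<in> J0" "x = lastj j" by blast
    then have jS: "j \<in> S" "j \<notin> C" "fst (?seg M) \<noteq> Some j" unfolding J0_def by auto
    note lp = lastj_prop[OF jS(1)]
    have xM: "x < M" using lp jS(3) j(2) NM by (metis less_Suc_eq)
    have nd: "\<not> snd (snd (?seg x))"
    proof
      assume "snd (snd (?seg x))"
      then have "completes n A one one j x" using lp j(2) by (simp add: completes_def)
      then have "j \<in> C" using xM jS(1) unfolding C_def by blast
      then show False using jS(2) by simp
    qed
    have nx: "fst (?seg (Suc x)) \<noteq> Some j"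
      using lp j(2) xM NM by (metis Suc_less_eq not_less_eq_eq)
    show "x \<in> preempt_points n A one one"
      unfolding preempt_points_def using lp j(2) nd nx by auto
  qed
  have injJ0: "inj_on lastj J0"
  proof
    fix a b
    assume ab: "a \<in> J0" "b \<in> J0" "lastj a = lastj b"
    then have "a \<in> S" "b \<in> S" unfolding J0_def by auto
    then have "fst (?seg (lastj a)) = Some a" "fst (?seg (lastj b)) = Some b"
      using lastj_prop by blast+
    then show "a = b" using ab(3) by (metis option.inject)
  qed
  have cardJ0: "card J0 \<le> s"
  proof -
    have "card J0 = card (lastj ` J0)" using injJ0 by (simp add: card_image)
    also have "\<dots> \<le> card (preempt_points n A one one)"
      using J0pp pl unfolding preempt_le_def by (intro card_mono) simp_all
    also have "\<dots> \<le> s" using pl unfolding preempt_le_def by simp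
    finally show ?thesis .
  qed
  have "S \<subseteq> C \<union> J0 \<union> set_option (fst (?seg M))" unfolding J0_def C_def by auto
  then have "card S \<le> card (C \<union> J0 \<union> set_option (fst (?seg M)))"
    by (intro card_mono) (use finC finS in \<open>auto simp: J0_def\<close>)
  also have "\<dots> \<le> card C + card J0 + card (set_option (fst (?seg M)))"
    using card_Un_le[of "C \<union> J0" "set_option (fst (?seg M))"] card_Un_le[of C J0] by linarith
  finally have cardS: "card S \<le> 2 * s"
    using cardC cardJ0 card_set_option_le[of "fst (?seg M)"] by linarith
  define \<epsilon> :: real where "\<epsilon> = 1 / (real n * real n)"
  have n1: "n \<ge> 1" using s1 ns by simp
  have e0: "0 < \<epsilon>" unfolding \<epsilon>_def using n1 by simp
  have rn1: "1 \<le> real n" using n1 by simp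
  have nn1: "1 * 1 \<le> real n * real n" by (rule mult_mono) (use rn1 in auto)
  have e1: "\<epsilon> \<le> 1" unfolding \<epsilon>_def using nn1 by simp
  define q where "q = (\<lambda>j. if j \<in> S then 1 else \<epsilon>)"
  have opt: "opt_cost n q \<le> ereal (real n * real n * \<epsilon> + real (card S) * real (card S))"
    unfolding q_def by (rule opt_bound[OF Sn e0 e1])
  have "real n * real n * \<epsilon> = 1" unfolding \<epsilon>_def using n1 by simp
  moreover have "real (card S) * real (card S) \<le> 4 * real s * real s"
  proof -
    have "real (card S) \<le> 2 * real s" using cardS by linarith
    then have "real (card S) * real (card S) \<le> (2 * real s) * (2 * real s)"
      by (intro mult_mono) auto
    then show ?thesis by simp
  qed
  ultimately have "real n * real n * \<epsilon> + real (card S) * real (card S) \<le> 1 + 4 * real s * real s"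
    by linarith
  then have optb: "opt_cost n q \<le> ereal (1 + 4 * real s * real s)"
    using opt by (meson ereal_less_eq(3) order_trans)
  have stepeq: "step n q (A one (hist n A one one k)) (hist n A one one k)
              = step n one (A one (hist n A one one k)) (hist n A one one k)" if k: "k < N" for k
  proof (rule step_cong)
    fix j assume a: "fst (A one (hist n A one one k)) = Some j" and jn: "j < n"
    show "q j = one j"
    proof (cases "j \<in> S")
      case True then show ?thesis by (simp add: q_def one_def)
    next
      case False
      have "processed (hist n A one one k) j = 0"
        by (rule processed_zero) (use False k in \<open>auto simp: hist_map S_def\<close>)
      then have "fst (?seg k) = Some j"
        using a jn by (simp add: segs_def step_def Let_def one_def)
      then have "j \<in> S" using k unfolding S_def by blast
      then show ?thesis using False by simp
    qed
  qed
  have histeq: "hist n A one q k = hist n A one one k" if "k \<le> N" for k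
    by (rule hist_cong[of N, OF stepeq that])
  have segeq: "segs n A one q i = ?seg i" if "i < N" for i
    using histeq[of i] stepeq[of i] that by (simp add: segs_def)
  have tq: "time n A one q N = time n A one one N"
    unfolding time_def using segeq by simp
  have compl: "ereal (real s) \<le> compl_time n A one q j" if j: "j < n" "j \<notin> S" for j
  proof (cases "\<exists>i. completes n A one q j i")
    case False then show ?thesis unfolding compl_time_def using False by (simp del: not_ex)
  next
    case True
    define L where "L = (LEAST i. completes n A one q j i)"
    have cL: "completes n A one q j L" unfolding L_def using True by (rule LeastI_ex)
    have NL: "N \<le> L"
    proof (rule ccontr)
      assume "\<not> N \<le> L"
      then have "L < N" by simp
      then have "fst (?seg L) = Some j" using cL segeq by (simp add: completes_def)
      then show False using j \<open>L < N\<close> unfolding S_def by blast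
    qed
    have "(\<Sum>k<N. len (segs n A one q k)) \<le> (\<Sum>k\<le>L. len (segs n A one q k))"
      by (rule sum_mono2) (use NL segs_len_nonneg in auto)
    then have "real s \<le> (\<Sum>k\<le>L. len (segs n A one q k))"
      using tN tq unfolding time_def by linarith
    then show ?thesis unfolding compl_time_def L_def using True by simp
  qed
  have "(\<Sum>j<n. (if j \<in> S then 0 else ereal (real s))) \<le> total_cost n A one q"
    unfolding total_cost_def by (rule sum_mono) (use compl compl_time_nonneg in auto)
  moreover have "(\<Sum>j<n. (if j \<in> S then 0 else ereal (real s))) = ereal (real s * real (card ({..<n} - S)))"
  proof -
    have "(\<Sum>j<n. (if j \<in> S then 0 else ereal (real s))) = ereal (\<Sum>j<n. (if j \<in> S then 0 else real s))"
      by (simp add: sum_ereal[symmetric] if_distrib del: sum_ereal) (rule sum.cong; simp)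
    also have "(\<Sum>j<n. (if j \<in> S then 0 else real s)) = real s * real (card ({..<n} - S))"
      by (simp add: sum.If_cases Diff_eq)
    finally show ?thesis .
  qed
  moreover have "real (card ({..<n} - S)) \<ge> real n - 2 * real s"
  proof -
    have "card ({..<n} - S) = n - card S" using Sn finS by (simp add: card_Diff_subset)
    then show ?thesis using cardS by linarith
  qed
  ultimately have alg: "ereal (real s * (real n - 2 * real s)) \<le> total_cost n A one q"
    by (smt (verit, best) ereal_less_eq(3) mult_left_mono of_nat_0_le_iff order_trans)
  show ?thesis
    by (rule exI[of _ q]) (use alg optb e0 e1 in \<open>auto simp: q_def\<close>)
qed



theorem mainTheorem5:
  shows "\<exists>c::real. c > 0 \<and>
    (\<forall>(n::nat) (s::nat) (A::alg).
       online_alg A \<longrightarrow> s \<ge> 1 \<longrightarrow>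
       (\<forall>p pr. (\<forall>j<n. p j > 0 \<and> pr j = p j) \<longrightarrow> preempt_le n A pr p s) \<longrightarrow>
       (\<exists>p pr. (\<forall>j<n. p j > 0 \<and> pr j \<ge> p j) \<and>
          total_cost n A pr p \<ge> ereal (c * (real n - real s) / real s) * opt_cost n p))"
proof (rule exI[of _ "1/24"], intro conjI allI impI)
  show "(0::real) < 1/24" by simp
  fix n s :: nat and A :: alg
  assume "online_alg A" and s1: "1 \<le> s"
    and H: "\<forall>p pr. (\<forall>j<n. p j > 0 \<and> pr j = p j) \<longrightarrow> preempt_le n A pr p s"
  define f where "f = (1/24) * (real n - real s) / real s"
  have pl: "preempt_le n A one one s" using H by (simp add: one_def)
  have ok1: "\<forall>j<n. 0 < one j \<and> one j \<le> one j" by (simp add: one_def)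
  have key: "\<exists>p pr. (\<forall>j<n. p j > 0 \<and> pr j \<ge> p j) \<and>
          total_cost n A pr p \<ge> ereal f * opt_cost n p"
  proof (cases "3 * n < 7 * s")
    case True
    have "real n - real s \<le> 24 * real s" using True by linarith
    then have f1: "f \<le> 1" unfolding f_def using s1 by (simp add: field_simps)
    have "ereal f * opt_cost n one \<le> opt_cost n one"
      by (rule ereal_scale_le[OF f1 opt_cost_nonneg])
    also have "\<dots> \<le> total_cost n A one one" by (rule opt_le_alg)
    finally show ?thesis using ok1 by blast
  next
    case False
    then have ns: "s \<le> n" by linarith
    show ?thesis
    proof (cases "\<forall>k. time n A one one k < real s")
      case True
      then have "total_cost n A one one = \<infinity>" using zeno_case ns by blast
      then show ?thesis using ok1 by (intro exI[of _ one]) auto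
    next
      case nz: False
      then have "\<exists>k. real s \<le> time n A one one k" by (simp add: not_less)
      from adversary[OF pl s1 ns this] obtain q where
        q: "\<forall>j. 0 < q j \<and> q j \<le> 1"
        and alg: "ereal (real s * (real n - 2 * real s)) \<le> total_cost n A one q"
        and opt: "opt_cost n q \<le> ereal (1 + 4 * real s * real s)" by blast
      have f0: "0 \<le> f" unfolding f_def using ns by simp
      have "ereal f * opt_cost n q \<le> ereal f * ereal (1 + 4 * real s * real s)"
        by (rule ereal_mult_left_mono[OF opt]) (use f0 in simp)
      also have "\<dots> = ereal (f * (1 + 4 * real s * real s))" by simp
      also have "f * (1 + 4 * real s * real s) \<le> real s * (real n - 2 * real s)"
      proof -
        have rs: "1 \<le> real s" using s1 by simp
        have "1 * 1 \<le> real s * real s" by (rule mult_mono) (use rs in auto)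
        then have "f * (1 + 4 * real s * real s) \<le> f * (5 * (real s * real s))"
          using f0 by (intro mult_left_mono) auto
        also have "\<dots> = (5 * (real n - real s) / 24) * real s"
          unfolding f_def using s1 by (simp add: field_simps)
        also have "\<dots> \<le> (real n - 2 * real s) * real s"
          by (rule mult_right_mono) (use False in auto)
        finally show ?thesis by (simp add: mult.commute)
      qed
      then have "ereal (f * (1 + 4 * real s * real s)) \<le> ereal (real s * (real n - 2 * real s))"
        by simp
      finally have "ereal f * opt_cost n q \<le> total_cost n A one q" using alg by (rule order_trans)
      moreover have "\<forall>j<n. 0 < q j \<and> q j \<le> one j" using q by (simp add: one_def)
      ultimately show ?thesis by blast
    qed
  qed
  then show "\<exists>p pr. (\<forall>j<n. p j > 0 \<and> pr j \<ge> p j) \<and>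
          total_cost n A pr p \<ge> ereal ((1/24) * (real n - real s) / real s) * opt_cost n p"
    unfolding f_def .
qed

end
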